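(* Let $X$ be a countably infinite set, $W\subseteq\mathbb R^X$ containing the worlds below, and $\succeq$ a preorder on $W$ satisfying Strong Pareto and Permutation Invariance. Let $A,B\subseteq X$ be infinite and disjoint, and $k,l\in\mathbb R$ with $k\neq l$. Define $w(x)=k$ for $x\in A$, $w(x)=l$ otherwise, and $v(x)=k$ for $x\in B$, $v(x)=l$ otherwise. Then $w$ and $v$ are incomparable: neither $w\succeq v$ nor $v\succeq w$.
   Context: For a preorder $\succeq$, $w\succ v$ means $w\succeq v$ and not $v\succeq w$. For a permutation $\pi$ of $X$, $\pi(w)(x)=w(\pi(x))$. Strong Pareto: for all $w,v\in W$, if $w(x)\ge v(x)$ for all $x$ and $w(x)>v(x)$ for some $x$, then $w\succ v$. Permutation Invariance: for all $w,v\in W$ and every permutation $\pi$ of $X$, $w\succeq v$ iff $\pi(w)\succeq\pi(v)$. (Here $W=\{k,l\}^X$ may be taken, so that $W$ is closed under permutations.) *)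

theory Defs
  imports Complex_Main "HOL-Library.Countable_Set"
begin

definition preorder_on :: "('x \<Rightarrow> real) set \<Rightarrow> (('x \<Rightarrow> real) \<Rightarrow> ('x \<Rightarrow> real) \<Rightarrow> bool) \<Rightarrow> bool" where
  "preorder_on W R \<longleftrightarrow> (\<forall>w\<in>W. R w w) \<and> (\<forall>u\<in>W. \<forall>v\<in>W. \<forall>w\<in>W. R u v \<longrightarrow> R v w \<longrightarrow> R u w)"

definition strictly_better :: "(('x \<Rightarrow> real) \<Rightarrow> ('x \<Rightarrow> real) \<Rightarrow> bool) \<Rightarrow> ('x \<Rightarrow> real) \<Rightarrow> ('x \<Rightarrow> real) \<Rightarrow> bool" where
  "strictly_better R w v \<longleftrightarrow> R w v \<and> \<not> R v w"

definition strong_pareto :: "('x \<Rightarrow> real) set \<Rightarrow> (('x \<Rightarrow> real) \<Rightarrow> ('x \<Rightarrow> real) \<Rightarrow> bool) \<Rightarrow> bool" where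
  "strong_pareto W R \<longleftrightarrow> (\<forall>w\<in>W. \<forall>v\<in>W. (\<forall>x. w x \<ge> v x) \<and> (\<exists>x. w x > v x) \<longrightarrow> strictly_better R w v)"

definition perm_world :: "('x \<Rightarrow> 'x) \<Rightarrow> ('x \<Rightarrow> real) \<Rightarrow> ('x \<Rightarrow> real)" where
  "perm_world \<pi> w = (\<lambda>x. w (\<pi> x))"

definition permutation_invariant :: "('x \<Rightarrow> real) set \<Rightarrow> (('x \<Rightarrow> real) \<Rightarrow> ('x \<Rightarrow> real) \<Rightarrow> bool) \<Rightarrow> bool" where
  "permutation_invariant W R \<longleftrightarrow> (\<forall>w\<in>W. \<forall>v\<in>W. \<forall>\<pi>. bij \<pi> \<longrightarrow> (R w v \<longleftrightarrow> R (perm_world \<pi> w) (perm_world \<pi> v)))"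

end

theory Submission
  imports Defs
begin

lemma ex_bij_ci:
  fixes S T :: "'x set"
  assumes "countable (UNIV :: 'x set)" "infinite S" "infinite T"
  shows "\<exists>f. bij_betw f S T"
proof -
  have cS: "countable S" "countable T" using assms(1) countable_subset[of _ UNIV] by auto
  obtain e where e: "bij_betw e S (UNIV::nat set)" using countableE_infinite[OF cS(1) assms(2)] by metis
  obtain d where d: "bij_betw d T (UNIV::nat set)" using countableE_infinite[OF cS(2) assms(3)] by metis
  have "bij_betw (inv_into T d \<circ> e) S T"
    by (rule bij_betw_trans[OF e bij_betw_inv_into[OF d]])
  then show ?thesis by blast
qed

lemma perm_exists:
  fixes S U A B :: "'x set"
  assumes "countable (UNIV :: 'x set)" "infinite S" "infinite U" "infinite A" "infinite B"
    "S \<inter> U = {}" "A \<inter> B = {}" "S \<union> U = A \<union> B"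
  shows "\<exists>\<pi>. bij \<pi> \<and> (\<forall>x. (\<pi> x \<in> A \<longleftrightarrow> x \<in> S) \<and> (\<pi> x \<in> B \<longleftrightarrow> x \<in> U))"
proof -
  obtain f where f: "bij_betw f S A" using ex_bij_ci assms by blast
  obtain g where g: "bij_betw g U B" using ex_bij_ci assms by blast
  define \<pi> where "\<pi> x = (if x \<in> S then f x else if x \<in> U then g x else x)" for x
  have "bij_betw \<pi> S A = bij_betw f S A" by (rule bij_betw_cong) (simp add: \<pi>_def)
  with f have 1: "bij_betw \<pi> S A" by simp
  have "bij_betw \<pi> U B = bij_betw g U B" by (rule bij_betw_cong) (use assms(6) in \<open>auto simp: \<pi>_def\<close>)
  with g have 2: "bij_betw \<pi> U B" by simp
  have 3: "bij_betw \<pi> (- (S \<union> U)) (- (A \<union> B))" using assms(8) unfolding \<pi>_def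
    by (auto simp: bij_betw_def inj_on_def)
  have "bij_betw \<pi> (S \<union> U \<union> - (S \<union> U)) (A \<union> B \<union> - (A \<union> B))"
    by (rule bij_betw_combine[OF bij_betw_combine[OF 1 2]]) (use 3 assms(7) in auto)
  moreover have "S \<union> U \<union> - (S \<union> U) = UNIV" "A \<union> B \<union> - (A \<union> B) = UNIV" by auto
  ultimately have b: "bij \<pi>" by metis
  have "\<forall>x. (\<pi> x \<in> A \<longleftrightarrow> x \<in> S) \<and> (\<pi> x \<in> B \<longleftrightarrow> x \<in> U)"
  proof
    fix x
    show "(\<pi> x \<in> A \<longleftrightarrow> x \<in> S) \<and> (\<pi> x \<in> B \<longleftrightarrow> x \<in> U)"
      using f g assms(6,7,8) unfolding \<pi>_def bij_betw_def by auto
  qed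
  with b show ?thesis by blast
qed

lemma one_dir:
  fixes W :: "('x \<Rightarrow> real) set"
    and R :: "('x \<Rightarrow> real) \<Rightarrow> ('x \<Rightarrow> real) \<Rightarrow> bool"
    and A B :: "'x set"
    and k l :: real
  assumes countable_X: "countable (UNIV :: 'x set)"
    and W_contains: "{f. \<forall>x. f x \<in> {k, l}} \<subseteq> W"
    and pre: "preorder_on W R"
    and sp: "strong_pareto W R"
    and pi: "permutation_invariant W R"
    and infA: "infinite A" and infB: "infinite B" and disj: "A \<inter> B = {}"
    and kl: "k \<noteq> l"
  shows "\<not> R (\<lambda>x. if x \<in> A then k else l) (\<lambda>x. if x \<in> B then k else l)"
proof
  define ind :: "'x set \<Rightarrow> 'x \<Rightarrow> real" where "ind S = (\<lambda>x. if x \<in> S then k else l)" for S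
  have inW: "ind S \<in> W" for S
    by (rule subsetD[OF W_contains]) (simp add: ind_def)
  assume "R (\<lambda>x. if x \<in> A then k else l) (\<lambda>x. if x \<in> B then k else l)"
  then have RAB: "R (ind A) (ind B)" unfolding ind_def .
  have tr: "R (ind S) (ind U)" if h: "infinite S" "infinite U" "S \<inter> U = {}" "S \<union> U = A \<union> B" for S U
  proof -
    obtain \<pi> where p: "bij \<pi>" "\<forall>x. (\<pi> x \<in> A \<longleftrightarrow> x \<in> S) \<and> (\<pi> x \<in> B \<longleftrightarrow> x \<in> U)"
      using perm_exists[OF countable_X h(1,2) infA infB h(3) disj h(4)] by blast
    have "perm_world \<pi> (ind A) = ind S" "perm_world \<pi> (ind B) = ind U"
      using p(2) unfolding perm_world_def ind_def by auto
    with RAB pi p(1) inW show ?thesis unfolding permutation_invariant_def by metis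
  qed
  have trans: "R u w" if "R u v" "R v w" "u \<in> W" "v \<in> W" "w \<in> W" for u v w
    using pre that unfolding preorder_on_def by blast
  have par: "strictly_better R w v" if "\<forall>x. w x \<ge> v x" "\<exists>x. w x > v x" "w \<in> W" "v \<in> W" for w v
    using sp that unfolding strong_pareto_def by blast
  have RBA: "R (ind B) (ind A)" using tr[of B A] infA infB disj by auto
  show False
  proof (cases "k > l")
    case True
    obtain a where a: "a \<in> A" using infA using infinite_imp_nonempty by blast
    have 1: "R (ind (A - {a})) (ind (B \<union> {a}))"
      using tr[of "A - {a}" "B \<union> {a}"] infA infB disj a by auto
    have "strictly_better R (ind (B \<union> {a})) (ind B)"
    proof (rule par)
      show "\<forall>x. ind (B \<union> {a}) x \<ge> ind B x" using True by (auto simp: ind_def)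
      show "\<exists>x. ind (B \<union> {a}) x > ind B x" using True a disj by (intro exI[of _ a]) (auto simp: ind_def)
    qed (rule inW)+
    then have 2: "R (ind (B \<union> {a})) (ind B)" unfolding strictly_better_def by blast
    have 3: "R (ind (A - {a})) (ind A)" using trans[OF trans[OF 1 2] RBA] inW by blast
    have "strictly_better R (ind A) (ind (A - {a}))"
    proof (rule par)
      show "\<forall>x. ind A x \<ge> ind (A - {a}) x" using True by (auto simp: ind_def)
      show "\<exists>x. ind A x > ind (A - {a}) x" using True a by (intro exI[of _ a]) (auto simp: ind_def)
    qed (rule inW)+
    with 3 show False unfolding strictly_better_def by blast
  next
    case False
    then have lt: "k < l" using kl by auto
    obtain b where b: "b \<in> B" using infB using infinite_imp_nonempty by blast
    have 1: "R (ind (A \<union> {b})) (ind (B - {b}))"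
      using tr[of "A \<union> {b}" "B - {b}"] infA infB disj b by auto
    have "strictly_better R (ind (B - {b})) (ind B)"
    proof (rule par)
      show "\<forall>x. ind (B - {b}) x \<ge> ind B x" using lt by (auto simp: ind_def)
      show "\<exists>x. ind (B - {b}) x > ind B x" using lt b by (intro exI[of _ b]) (auto simp: ind_def)
    qed (rule inW)+
    then have 2: "R (ind (B - {b})) (ind B)" unfolding strictly_better_def by blast
    have 3: "R (ind (A \<union> {b})) (ind A)" using trans[OF trans[OF 1 2] RBA] inW by blast
    have "strictly_better R (ind A) (ind (A \<union> {b}))"
    proof (rule par)
      show "\<forall>x. ind A x \<ge> ind (A \<union> {b}) x" using lt by (auto simp: ind_def)
      show "\<exists>x. ind A x > ind (A \<union> {b}) x" using lt b disj by (intro exI[of _ b]) (auto simp: ind_def)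
    qed (rule inW)+
    with 3 show False unfolding strictly_better_def by blast
  qed
qed

theorem mainTheorem5:
  fixes W :: "('x \<Rightarrow> real) set"
    and R :: "('x \<Rightarrow> real) \<Rightarrow> ('x \<Rightarrow> real) \<Rightarrow> bool"
    and A B :: "'x set"
    and k l :: real
  assumes countable_X: "countable (UNIV :: 'x set)"
    and infinite_X: "infinite (UNIV :: 'x set)"
    and W_contains: "{f. \<forall>x. f x \<in> {k, l}} \<subseteq> W"
    and W_perm_closed: "\<And>\<pi> f. bij \<pi> \<Longrightarrow> f \<in> W \<Longrightarrow> perm_world \<pi> f \<in> W"
    and pre: "preorder_on W R"
    and sp: "strong_pareto W R"
    and pi: "permutation_invariant W R"
    and infA: "infinite A" and infB: "infinite B" and disj: "A \<inter> B = {}"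
    and kl: "k \<noteq> l"
  shows "\<not> R (\<lambda>x. if x \<in> A then k else l) (\<lambda>x. if x \<in> B then k else l)
       \<and> \<not> R (\<lambda>x. if x \<in> B then k else l) (\<lambda>x. if x \<in> A then k else l)"
  using one_dir[OF countable_X W_contains pre sp pi infA infB disj kl]
    one_dir[OF countable_X W_contains pre sp pi infB infA _ kl] disj by blast

end
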